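(* For $1\le p\le n$ let $M_{np}=\chi_n(\pi,p)$ where $\pi$ is uniform on $\mathfrak S_n$, and $\phi_{np}(u)=\sum_{l\ge0}\mathbb P(M_{np}=l)u^l$. Then $$\phi_{np}(u)=\frac{p}{n}\phi_{pp}(u)+\Bigl(1-\frac pn\Bigr)u,\qquad \phi_{nn}(u)=\frac un\Bigl[1+\sum_{p=1}^{n-1}\phi_{n-1,p}(u)\Bigr]\ (n\ge2),$$ and explicitly $$\phi_{np}(u)=\frac{n-p+1}{n}\,u+\frac pn\,\frac{u^2}{2-u}\Bigl[1-\frac{u(u+1)\cdots(u+p-2)}{p!}\Bigr],$$ where the product $u(u+1)\cdots(u+p-2)$ is empty (equal to $1$) when $p=1$.
   Context: $[n]=\{1,\dots,n\}$, $\mathfrak S_n$ the symmetric group on $[n]$, right action $i\pi$, products composed left to right; $\tau(i,j)$ the transposition exchanging $i,j$ ($\tau(n,n)$ the identity). For $\pi\in\mathfrak S_n$ let $q(\pi)=n\pi^{-1}$, and for $n\ge2$ let $\downarrow\pi\in\mathfrak S_{n-1}$ be the restriction to $[n-1]$ of $\tau(n,q(\pi))\pi$. The "number of moves" function $\chi_n(\pi,p)$, $\pi\in\mathfrak S_n$, $p\in[n]$, is defined recursively: $\chi_1(\mathrm{id},1)=1$; for $n\ge2$, with $q=q(\pi)$: $\chi_n(\pi,p)=\chi_{n-1}(\downarrow\pi,p)$ if $p\ne n,p\ne q$; $=1+\chi_{n-1}(\downarrow\pi,q)$ if $p=n\ne q$; $=1$ if $p=q\ne n$; $=1$ if $p=q=n$.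 *)

theory Defs
  imports "HOL-Combinatorics.Combinatorics" Complex_Main
begin

text \<open>Right action i pi is written pi i; the left-to-right product sigma pi (first sigma, then pi)
  is the function composition pi o sigma.\<close>

definition Perms :: "nat \<Rightarrow> (nat \<Rightarrow> nat) set" where
  "Perms n = {\<pi>. \<pi> permutes {1..n}}"

definition qpos :: "nat \<Rightarrow> (nat \<Rightarrow> nat) \<Rightarrow> nat" where
  "qpos n \<pi> = inv \<pi> n"

text \<open>down pi: the product tau(n,q(pi)) pi, which fixes n, hence restricts to a permutation
  of [n-1] (as a function it is the identity outside {1..n-1}).\<close>
definition down :: "nat \<Rightarrow> (nat \<Rightarrow> nat) \<Rightarrow> (nat \<Rightarrow> nat)" where
  "down n \<pi> = \<pi> \<circ> Transposition.transpose n (qpos n \<pi>)"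

fun chi :: "nat \<Rightarrow> (nat \<Rightarrow> nat) \<Rightarrow> nat \<Rightarrow> nat" where
  "chi 0 \<pi> p = 0"
| "chi (Suc 0) \<pi> p = 1"
| "chi (Suc (Suc m)) \<pi> p =
    (let n = Suc (Suc m); q = qpos n \<pi> in
     if p \<noteq> n \<and> p \<noteq> q then chi (Suc m) (down n \<pi>) p
     else if p = n \<and> n \<noteq> q then 1 + chi (Suc m) (down n \<pi>) q
     else 1)"

definition probM :: "nat \<Rightarrow> nat \<Rightarrow> nat \<Rightarrow> real" where
  "probM n p l = real (card {\<pi> \<in> Perms n. chi n \<pi> p = l}) / fact n"

text \<open>Probability generating function: sum over l >= 0 of P(M_np = l) u^l; all terms with
  l outside the (finite) range of M_np vanish, so the sum is over that range.\<close>
definition phi :: "nat \<Rightarrow> nat \<Rightarrow> real \<Rightarrow> real" where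
  "phi n p u = (\<Sum>l \<in> (\<lambda>\<pi>. chi n \<pi> p) ` Perms n. probM n p l * u ^ l)"

end

theory Submission
  imports Defs
begin

lemma perms_fin: "finite (Perms n)"
  unfolding Perms_def by (rule finite_permutations) simp

lemma card_perms: "card (Perms n) = fact n"
  unfolding Perms_def by (rule card_permutations) auto

definition SS :: "nat \<Rightarrow> nat \<Rightarrow> real \<Rightarrow> real" where
  "SS n p u = (\<Sum>\<pi>\<in>Perms n. u ^ chi n \<pi> p)"

lemma phi_SS: "phi n p u = SS n p u / fact n"
proof -
  have "phi n p u = (\<Sum>l \<in> (\<lambda>\<pi>. chi n \<pi> p) ` Perms n. real (card {\<pi> \<in> Perms n. chi n \<pi> p = l}) * u ^ l) / fact n"
    unfolding phi_def probM_def by (simp add: sum_divide_distrib)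
  also have "(\<Sum>l \<in> (\<lambda>\<pi>. chi n \<pi> p) ` Perms n. real (card {\<pi> \<in> Perms n. chi n \<pi> p = l}) * u ^ l)
     = (\<Sum>l \<in> (\<lambda>\<pi>. chi n \<pi> p) ` Perms n. (\<Sum>\<pi>\<in>{\<pi> \<in> Perms n. chi n \<pi> p = l}. u ^ chi n \<pi> p))"
    by (rule sum.cong) auto
  also have "\<dots> = SS n p u"
    unfolding SS_def by (rule sum.image_gen[symmetric]) (rule perms_fin)
  finally show ?thesis .
qed

lemma L1:
  assumes "\<sigma> permutes {1..M}" "q \<in> {1..Suc M}"
  shows "qpos (Suc M) (\<sigma> \<circ> transpose (Suc M) q) = q"
proof -
  have p: "\<sigma> \<circ> transpose (Suc M) q permutes {1..Suc M}"
    by (rule permutes_compose[OF permutes_swap_id permutes_subset[OF assms(1)]]) (use assms in auto)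
  have "\<sigma> (Suc M) = Suc M" by (rule permutes_not_in[OF assms(1)]) simp
  hence "(\<sigma> \<circ> transpose (Suc M) q) q = Suc M" by simp
  thus ?thesis unfolding qpos_def using permutes_inv_eq[OF p] by blast
qed

lemma L2: "down (Suc M) (\<sigma> \<circ> transpose (Suc M) q) = \<sigma> \<circ> transpose (Suc M) q \<circ> transpose (Suc M) (qpos (Suc M) (\<sigma> \<circ> transpose (Suc M) q))"
  unfolding down_def by simp

lemma L2':
  assumes "\<sigma> permutes {1..M}" "q \<in> {1..Suc M}"
  shows "down (Suc M) (\<sigma> \<circ> transpose (Suc M) q) = \<sigma>"
  unfolding down_def L1[OF assms] by (rule ext) simp

lemma L3:
  assumes "\<pi> permutes {1..Suc M}"
  shows "qpos (Suc M) \<pi> \<in> {1..Suc M}"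
  unfolding qpos_def using permutes_in_image[OF permutes_inv[OF assms], of "Suc M"] by simp

lemma L4:
  assumes "\<pi> permutes {1..Suc M}"
  shows "down (Suc M) \<pi> permutes {1..M}"
proof -
  have p: "down (Suc M) \<pi> permutes {1..Suc M}" unfolding down_def
    by (rule permutes_compose[OF permutes_swap_id assms]) (use L3[OF assms] in auto)
  have "\<pi> (inv \<pi> (Suc M)) = Suc M" using permutes_inverses(1)[OF assms] by simp
  hence "down (Suc M) \<pi> (Suc M) = Suc M" unfolding down_def qpos_def by simp
  thus ?thesis by (intro permutes_superset[OF p]) (auto simp: le_Suc_eq)
qed

lemma L5: "down (Suc M) \<pi> \<circ> transpose (Suc M) (qpos (Suc M) \<pi>) = \<pi>"
  unfolding down_def by (rule ext) simp

lemma reindex: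
  "sum f (Perms (Suc M)) = (\<Sum>\<sigma>\<in>Perms M. \<Sum>q\<in>{1..Suc M}. f (\<sigma> \<circ> transpose (Suc M) q))"
proof -
  have bij: "bij_betw (\<lambda>(\<sigma>,q). \<sigma> \<circ> transpose (Suc M) q) (Perms M \<times> {1..Suc M}) (Perms (Suc M))"
  proof (rule bij_betw_byWitness[where f' = "\<lambda>\<pi>. (down (Suc M) \<pi>, qpos (Suc M) \<pi>)"])
    show "\<forall>a\<in>Perms M \<times> {1..Suc M}. (\<lambda>\<pi>. (down (Suc M) \<pi>, qpos (Suc M) \<pi>)) ((\<lambda>(\<sigma>, q). \<sigma> \<circ> transpose (Suc M) q) a) = a"
      using L1 L2' unfolding Perms_def by auto
    show "\<forall>a'\<in>Perms (Suc M). (\<lambda>(\<sigma>, q). \<sigma> \<circ> transpose (Suc M) q) ((\<lambda>\<pi>. (down (Suc M) \<pi>, qpos (Suc M) \<pi>)) a') = a'"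
      using L5 by auto
    show "(\<lambda>(\<sigma>, q). \<sigma> \<circ> transpose (Suc M) q) ` (Perms M \<times> {1..Suc M}) \<subseteq> Perms (Suc M)"
      unfolding Perms_def
      by (auto intro!: permutes_compose[OF permutes_swap_id permutes_subset])
    show "(\<lambda>\<pi>. (down (Suc M) \<pi>, qpos (Suc M) \<pi>)) ` Perms (Suc M) \<subseteq> Perms M \<times> {1..Suc M}"
      unfolding Perms_def using L3 L4 by auto
  qed
  have "sum f (Perms (Suc M)) = (\<Sum>x\<in>Perms M \<times> {1..Suc M}. f ((\<lambda>(\<sigma>,q). \<sigma> \<circ> transpose (Suc M) q) x))"
    using sum.reindex_bij_betw[OF bij, of f] by simp
  also have "\<dots> = (\<Sum>\<sigma>\<in>Perms M. \<Sum>q\<in>{1..Suc M}. f (\<sigma> \<circ> transpose (Suc M) q))"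
    unfolding sum.cartesian_product by (rule sum.cong) auto
  finally show ?thesis .
qed

lemma chi_step:
  assumes "\<sigma> permutes {1..Suc m}" "q \<in> {1..Suc (Suc m)}"
  shows "chi (Suc (Suc m)) (\<sigma> \<circ> transpose (Suc (Suc m)) q) p =
     (if p \<noteq> Suc (Suc m) \<and> p \<noteq> q then chi (Suc m) \<sigma> p
      else if p = Suc (Suc m) \<and> Suc (Suc m) \<noteq> q then 1 + chi (Suc m) \<sigma> q else 1)"
  using L1[OF assms] L2'[OF assms] by (simp add: Let_def)

lemma SS_one: "SS (Suc 0) p u = u"
  unfolding SS_def using card_perms[of "Suc 0"] by simp

lemma sum_if_eq:
  assumes "finite A" "p \<in> A"
  shows "(\<Sum>q\<in>A. if q = p then a else b) = a + (real (card A) - 1) * (b::real)"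
proof -
  have 1: "(\<Sum>q\<in>A. if q = p then a else b) = a + (\<Sum>q\<in>A-{p}. if q = p then a else b)"
    using sum.remove[OF assms, of "\<lambda>q. if q = p then a else b"] by simp
  have 2: "(\<Sum>q\<in>A-{p}. if q = p then a else b) = (\<Sum>q\<in>A-{p}. b)" by (rule sum.cong) auto
  have "card A \<ge> 1" using assms by (auto simp: Suc_le_eq card_gt_0_iff)
  then have 3: "(\<Sum>q\<in>A-{p}. b) = (real (card A) - 1) * b" using assms by (simp add: card_Diff_singleton of_nat_diff)
  show ?thesis unfolding 1 2 3 ..
qed

lemma SS_rec_lt:
  assumes "1 \<le> p" "p < Suc (Suc m)"
  shows "SS (Suc (Suc m)) p u = fact (Suc m) * u + real (Suc m) * SS (Suc m) p u"
proof -
  have "SS (Suc (Suc m)) p u = (\<Sum>\<sigma>\<in>Perms (Suc m). \<Sum>q\<in>{1..Suc (Suc m)}. u ^ chi (Suc (Suc m)) (\<sigma> \<circ> transpose (Suc (Suc m)) q) p)"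
    unfolding SS_def by (rule reindex)
  also have "\<dots> = (\<Sum>\<sigma>\<in>Perms (Suc m). \<Sum>q\<in>{1..Suc (Suc m)}. if q = p then u else u ^ chi (Suc m) \<sigma> p)"
  proof (intro sum.cong refl)
    fix \<sigma> q assume "\<sigma> \<in> Perms (Suc m)" "q \<in> {1..Suc (Suc m)}"
    then show "u ^ chi (Suc (Suc m)) (\<sigma> \<circ> transpose (Suc (Suc m)) q) p = (if q = p then u else u ^ chi (Suc m) \<sigma> p)"
      using assms by (subst chi_step) (auto simp: Perms_def)
  qed
  also have "\<dots> = (\<Sum>\<sigma>\<in>Perms (Suc m). u + real (Suc m) * u ^ chi (Suc m) \<sigma> p)"
    by (intro sum.cong refl) (subst sum_if_eq, use assms in auto)
  also have "\<dots> = fact (Suc m) * u + real (Suc m) * SS (Suc m) p u"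
    unfolding SS_def by (simp add: sum.distrib sum_distrib_left card_perms algebra_simps)
  finally show ?thesis .
qed

lemma SS_rec_eq:
  "SS (Suc (Suc m)) (Suc (Suc m)) u = fact (Suc m) * u + u * (\<Sum>q=1..Suc m. SS (Suc m) q u)"
proof -
  have "SS (Suc (Suc m)) (Suc (Suc m)) u = (\<Sum>\<sigma>\<in>Perms (Suc m). \<Sum>q\<in>{1..Suc (Suc m)}. u ^ chi (Suc (Suc m)) (\<sigma> \<circ> transpose (Suc (Suc m)) q) (Suc (Suc m)))"
    unfolding SS_def by (rule reindex)
  also have "\<dots> = (\<Sum>\<sigma>\<in>Perms (Suc m). \<Sum>q\<in>{1..Suc (Suc m)}. if q = Suc (Suc m) then u else u * u ^ chi (Suc m) \<sigma> q)"
  proof (intro sum.cong refl)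
    fix \<sigma> q assume "\<sigma> \<in> Perms (Suc m)" "q \<in> {1..Suc (Suc m)}"
    then show "u ^ chi (Suc (Suc m)) (\<sigma> \<circ> transpose (Suc (Suc m)) q) (Suc (Suc m)) = (if q = Suc (Suc m) then u else u * u ^ chi (Suc m) \<sigma> q)"
      by (subst chi_step) (auto simp: Perms_def)
  qed
  also have "\<dots> = (\<Sum>\<sigma>\<in>Perms (Suc m). u + (\<Sum>q=1..Suc m. u * u ^ chi (Suc m) \<sigma> q))"
    by (intro sum.cong refl) simp
  also have "\<dots> = fact (Suc m) * u + u * (\<Sum>q=1..Suc m. SS (Suc m) q u)"
  proof -
    have e1: "(\<Sum>\<sigma>\<in>Perms (Suc m). \<Sum>q=1..Suc m. u * u ^ chi (Suc m) \<sigma> q) = u * (\<Sum>q=1..Suc m. \<Sum>\<sigma>\<in>Perms (Suc m). u ^ chi (Suc m) \<sigma> q)"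
      by (subst sum.swap) (simp only: sum_distrib_left)
    show ?thesis unfolding SS_def sum.distrib e1 by (simp add: card_perms algebra_simps)
  qed
  finally show ?thesis .
qed


lemma phi_rec_lt:
  assumes "1 \<le> p" "p \<le> Suc m"
  shows "phi (Suc (Suc m)) p u = u / real (Suc (Suc m)) + real (Suc m) / real (Suc (Suc m)) * phi (Suc m) p u"
proof -
  have f: "(fact (Suc (Suc m)) :: real) = real (Suc (Suc m)) * fact (Suc m)" by simp
  have "fact (Suc m) > (0::real)" by simp
  then show ?thesis unfolding phi_SS SS_rec_lt[OF assms(1) le_imp_less_Suc[OF assms(2)]] f
    by (simp add: field_simps del: of_nat_Suc fact_Suc)
qed

lemma phi_one: "phi (Suc 0) p u = u"
  unfolding phi_SS SS_one by simp

lemma alg1: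
  fixes x p f u :: real
  assumes "x > 0"
  shows "u / (1 + x) + x / (1 + x) * (p / x * f + (1 - p / x) * u) = p / (1 + x) * f + (1 - p / (1 + x)) * u"
proof -
  have h: "1 + x \<noteq> 0" "x \<noteq> 0" using assms by auto
  have e: "x * (p / x * f + (1 - p / x) * u) = p * f + (x - p) * u" using h by (simp add: algebra_simps)
  have l: "u / (1 + x) + x / (1 + x) * (p / x * f + (1 - p / x) * u) = (u + x * (p / x * f + (1 - p / x) * u)) / (1 + x)"
    by (simp add: add_divide_distrib)
  have r: "p / (1 + x) * f + (1 - p / (1 + x)) * u = (p * f + (1 + x - p) * u) / (1 + x)"
  proof -
    have r1: "1 - p / (1 + x) = (1 + x - p) / (1 + x)" using h by (simp add: diff_divide_distrib)
    show ?thesis unfolding r1 by (simp add: add_divide_distrib)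
  qed
  show ?thesis unfolding l r e by (simp add: algebra_simps)
qed

lemma claim1:
  assumes "1 \<le> p" "p \<le> n"
  shows "phi n p u = real p / real n * phi p p u + (1 - real p / real n) * u"
  using assms(2)
proof (induction n rule: dec_induct)
  case base
  then show ?case using assms by simp
next
  case (step n)
  obtain m where n: "n = Suc m" using step assms by (cases n) auto
  have "phi (Suc n) p u = u / real (Suc n) + real n / real (Suc n) * phi n p u"
    unfolding n by (rule phi_rec_lt) (use assms step n in auto)
  also have "\<dots> = real p / real (Suc n) * phi p p u + (1 - real p / real (Suc n)) * u"
  proof -
    have "real n > 0" using step assms by simp
    then show ?thesis unfolding step.IH of_nat_Suc by (rule alg1)
  qed
  finally show ?case .
qed

lemma claim2:
  assumes "2 \<le> n"
  shows "phi n n u = u / real n * (1 + (\<Sum>p = 1..n - 1. phi (n - 1) p u))"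
proof -
  obtain m where n: "n = Suc (Suc m)" using assms by (metis add_2_eq_Suc le_Suc_ex)
  have f: "(fact (Suc (Suc m)) :: real) = real (Suc (Suc m)) * fact (Suc m)" by simp
  have "fact (Suc m) > (0::real)" by simp
  then show ?thesis unfolding n phi_SS SS_rec_eq f
    by (simp add: field_simps sum_divide_distrib[symmetric] del: of_nat_Suc fact_Suc)
qed


lemma Hsplit: "(\<Sum>p=1..Suc (Suc m). real (Suc (Suc m) - p + 1) * u + real p * A * (1 - pochhammer u (p - 1) / fact p))
     = (\<Sum>p=1..Suc m. real (Suc (Suc m) - p + 1) * u + real p * A * (1 - pochhammer u (p - 1) / fact p))
       + (u + real (Suc (Suc m)) * A * (1 - pochhammer u (Suc m) / fact (Suc (Suc m))))"
    by (simp only: sum.cl_ivl_Suc) simp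

lemma Hkey: "pochhammer (u + 1) m / fact m + real (Suc (Suc m)) * (pochhammer u (Suc m) / fact (Suc (Suc m)))
     = pochhammer ((u::real) + 1) (Suc m) / fact (Suc m)"
  proof -
    have a: "pochhammer u (Suc m) = u * pochhammer (u + 1) m" by (rule pochhammer_rec)
    have b: "pochhammer (u + 1) (Suc m) = pochhammer (u + 1) m * (u + 1 + real m)" by (simp add: pochhammer_Suc)
    have c: "(fact (Suc (Suc m)) :: real) = real (Suc (Suc m)) * fact (Suc m)" by (rule fact_Suc)
    have d: "(fact (Suc m) :: real) = real (Suc m) * fact m" by (rule fact_Suc)
    have e: "real (Suc (Suc m)) \<noteq> 0" by simp
    have "real (Suc (Suc m)) * (pochhammer u (Suc m) / fact (Suc (Suc m))) = pochhammer u (Suc m) / fact (Suc m)"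
      unfolding c using e by simp
    also have "\<dots> = u * pochhammer (u + 1) m / (real (Suc m) * fact m)" unfolding a d ..
    finally have f: "real (Suc (Suc m)) * (pochhammer u (Suc m) / fact (Suc (Suc m))) = u * pochhammer (u + 1) m / (real (Suc m) * fact m)" .
    have g: "pochhammer (u + 1) m / fact m = real (Suc m) * pochhammer (u + 1) m / (real (Suc m) * fact m)"
      by simp
    show ?thesis unfolding f g b d by (simp add: add_divide_distrib[symmetric] algebra_simps)
  qed

lemma alg2:
  fixes X Y Z k u A :: real
  assumes "X + k * Y = Z"
  shows "(u * (k - 1) * k / 2 + A * ((k - 1) * k / 2 - X)) + (k - 1) * u + (u + k * A * (1 - Y)) = u * k * (k + 1) / 2 + A * (k * (k + 1) / 2 - Z)"
  unfolding assms[symmetric] by (simp add: field_simps)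

lemma Hsum:
  fixes u A :: real
  shows "(\<Sum>p=1..Suc m. real (Suc m - p + 1) * u + real p * A * (1 - pochhammer u (p - 1) / fact p))
     = u * (real m + 1) * (real m + 2) / 2 + A * ((real m + 1) * (real m + 2) / 2 - pochhammer (u + 1) m / fact m)"
proof (induction m)
  case 0
  then show ?case by simp
next
  case (Suc m)
  have cong: "(\<Sum>p=1..Suc m. real (Suc (Suc m) - p + 1) * u + real p * A * (1 - pochhammer u (p - 1) / fact p))
     = (\<Sum>p=1..Suc m. (real (Suc m - p + 1) * u + real p * A * (1 - pochhammer u (p - 1) / fact p)) + u)"
  proof (rule sum.cong[OF refl])
    fix p assume "p \<in> {1..Suc m}"
    then have "real (Suc (Suc m) - p + 1) = real (Suc m - p + 1) + 1" by (simp add: Suc_diff_le)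
    then show "real (Suc (Suc m) - p + 1) * u + real p * A * (1 - pochhammer u (p - 1) / fact p)
      = (real (Suc m - p + 1) * u + real p * A * (1 - pochhammer u (p - 1) / fact p)) + u"
      by (simp add: algebra_simps)
  qed
  have cu: "(\<Sum>p=1..Suc m. u) = (real (Suc (Suc m)) - 1) * u" by simp
  have cong2: "(\<Sum>p=1..Suc m. (real (Suc m - p + 1) * u + real p * A * (1 - pochhammer u (p - 1) / fact p)) + u)
    = (\<Sum>p=1..Suc m. (real (Suc m - p + 1) * u + real p * A * (1 - pochhammer u (p - 1) / fact p))) + (real (Suc (Suc m)) - 1) * u"
    unfolding cu[symmetric] by (rule sum.distrib)
  have r1: "real m + 1 = real (Suc (Suc m)) - 1" "real m + 2 = real (Suc (Suc m))"
    "real (Suc m) + 1 = real (Suc (Suc m))" "real (Suc m) + 2 = real (Suc (Suc m)) + 1" by simp_all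
  show ?case unfolding Hsplit cong cong2 Suc.IH r1
    by (rule alg2[OF Hkey])
qed

lemma alg3:
  fixes A u M N P fm :: real
  assumes "A * (2 - u) = u ^ 2" "M > 0" "N > 0" "fm > 0"
  shows "u / N * (1 + (u * M * N / 2 + A * (M * N / 2 - P / fm)) / M) = u / N + A * (1 - u * P / (N * M * fm))"
proof -
  have a: "u * u + u * A = 2 * A" using assms(1) by (simp add: algebra_simps power2_eq_square)
  have "u / N * (1 + (u * M * N / 2 + A * (M * N / 2 - P / fm)) / M) = u / N + (u * u + u * A) / 2 - u * A * P / (N * M * fm)"
    using assms(2-4) by (simp add: field_simps)
  then show ?thesis unfolding a by (simp add: algebra_simps)
qed

lemma alg4:
  fixes p M u A c :: real
  assumes "p > 0" "M > 0"
  shows "p / M * (u / p + A * c) + (1 - p / M) * u = ((M - p + 1) * u + p * A * c) / M"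
  using assms by (simp add: field_simps)

lemma alg5:
  fixes p n u A c :: real
  assumes "p > 0" "n > 0"
  shows "p / n * (u / p + A * c) + (1 - p / n) * u = (n - p + 1) / n * u + p / n * A * c"
  using assms by (simp add: field_simps)

lemma diag:
  assumes u2: "u \<noteq> 2"
  shows "1 \<le> n \<Longrightarrow> phi n n u = u / real n + u ^ 2 / (2 - u) * (1 - pochhammer u (n - 1) / fact n)"
proof (induction n rule: less_induct)
  case (less n)
  define A where "A = u ^ 2 / (2 - u)"
  have hA: "A * (2 - u) = u ^ 2" unfolding A_def using u2 by simp
  show ?case
  proof (cases "n = 1")
    case True
    then show ?thesis using phi_one[of 1 u] by simp
  next
    case False
    then obtain m where n: "n = Suc (Suc m)" using less.prems by (metis One_nat_def Suc_le_D le_SucE le_antisym not_less_eq_eq)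
    have each: "phi (Suc m) p u = (real (Suc m - p + 1) * u + real p * A * (1 - pochhammer u (p - 1) / fact p)) / real (Suc m)"
      if p: "p \<in> {1..Suc m}" for p
    proof -
      have "phi (Suc m) p u = real p / real (Suc m) * phi p p u + (1 - real p / real (Suc m)) * u"
        using p by (intro claim1) auto
      also have "phi p p u = u / real p + A * (1 - pochhammer u (p - 1) / fact p)"
        unfolding A_def using p n by (intro less.IH) auto
      also have "real p / real (Suc m) * (u / real p + A * (1 - pochhammer u (p - 1) / fact p)) + (1 - real p / real (Suc m)) * u
          = ((real (Suc m) - real p + 1) * u + real p * A * (1 - pochhammer u (p - 1) / fact p)) / real (Suc m)"
        using p by (intro alg4) auto
      also have "real (Suc m) - real p + 1 = real (Suc m - p + 1)" using p by (simp add: of_nat_diff)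
      finally show ?thesis .
    qed
    have "phi n n u = u / real n * (1 + (\<Sum>p = 1..n - 1. phi (n - 1) p u))"
      using n by (intro claim2) auto
    also have "(\<Sum>p = 1..n - 1. phi (n - 1) p u) = (\<Sum>p=1..Suc m. (real (Suc m - p + 1) * u + real p * A * (1 - pochhammer u (p - 1) / fact p))) / real (Suc m)"
      unfolding sum_divide_distrib using each n by (intro sum.cong) auto
    also have "\<dots> = (u * (real m + 1) * (real m + 2) / 2 + A * ((real m + 1) * (real m + 2) / 2 - pochhammer (u + 1) m / fact m)) / real (Suc m)"
      unfolding Hsum ..
    also have "u / real n * (1 + \<dots>) = u / real n + A * (1 - u * pochhammer (u + 1) m / (real n * real (Suc m) * fact m))"
      using alg3[OF hA, of "real (Suc m)" "real n" "fact m" "pochhammer (u + 1) m"] n by (simp add: add.commute)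
    also have "u * pochhammer (u + 1) m / (real n * real (Suc m) * fact m) = pochhammer u (n - 1) / fact n"
      unfolding n by (simp add: pochhammer_rec mult.assoc)
    finally show ?thesis unfolding A_def .
  qed
qed

theorem mainTheorem6:
  fixes u :: real
  shows "(\<forall>n p. 1 \<le> p \<and> p \<le> n \<longrightarrow>
            phi n p u = real p / real n * phi p p u + (1 - real p / real n) * u)
       \<and> (\<forall>n. 2 \<le> n \<longrightarrow>
            phi n n u = u / real n * (1 + (\<Sum>p = 1..n - 1. phi (n - 1) p u)))
       \<and> (u \<noteq> 2 \<longrightarrow> (\<forall>n p. 1 \<le> p \<and> p \<le> n \<longrightarrow>
            phi n p u = real (n - p + 1) / real n * u
              + real p / real n * (u ^ 2 / (2 - u)) * (1 - pochhammer u (p - 1) / fact p)))"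
proof (intro conjI allI impI)
  fix n p :: nat assume "1 \<le> p \<and> p \<le> n"
  then show "phi n p u = real p / real n * phi p p u + (1 - real p / real n) * u"
    using claim1 by blast
next
  fix n :: nat assume "2 \<le> n"
  then show "phi n n u = u / real n * (1 + (\<Sum>p = 1..n - 1. phi (n - 1) p u))" by (rule claim2)
next
  fix n p :: nat assume u2: "u \<noteq> 2" and np: "1 \<le> p \<and> p \<le> n"
  have "phi n p u = real p / real n * phi p p u + (1 - real p / real n) * u"
    using claim1 np by blast
  also have "phi p p u = u / real p + u ^ 2 / (2 - u) * (1 - pochhammer u (p - 1) / fact p)"
    using diag[OF u2] np by blast
  also have "real p / real n * (u / real p + u ^ 2 / (2 - u) * (1 - pochhammer u (p - 1) / fact p)) + (1 - real p / real n) * u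
     = (real n - real p + 1) / real n * u + real p / real n * (u ^ 2 / (2 - u)) * (1 - pochhammer u (p - 1) / fact p)"
    using np by (intro alg5) auto
  also have "real n - real p + 1 = real (n - p + 1)" using np by (simp add: of_nat_diff)
  finally show "phi n p u = real (n - p + 1) / real n * u
              + real p / real n * (u ^ 2 / (2 - u)) * (1 - pochhammer u (p - 1) / fact p)" .
qed

end
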